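(* Let $a,b\in\mathrm{Act}$ with $a\neq b$. For every formula $\varphi$ of the one-variable, diamond-free fragment of $D\oplus_\subseteq K4$, $\varphi$ is satisfiable (at some state of some $D\oplus_\subseteq K4$ Kripke structure) if and only if $[\![\mathrm{trans}(\varphi)]\!]_L\neq\emptyset$.
   Context: $D\oplus_\subseteq K4$ Kripke structures are $M=(W,\xrightarrow{1},\xrightarrow{2},V)$ with $W$ nonempty, $\xrightarrow{1}$ serial ($\forall x\exists y.\,x\xrightarrow{1}y$), $\xrightarrow{2}$ transitive, $\xrightarrow{1}\subseteq\xrightarrow{2}$, and $V:W\to2^{\{p\}}$. Formulae of the one-variable diamond-free fragment: $\varphi::=p\mid\neg p\mid\varphi\vee\varphi\mid\varphi\wedge\varphi\mid[1]\varphi\mid[2]\varphi$, with $M,w\models p$ iff $p\in V(w)$, boolean connectives as usual, and $M,w\models[i]\varphi$ iff $M,w'\models\varphi$ for all $w'$ with $w\xrightarrow{i}w'$. recHML formulae over a finite action set $\mathrm{Act}$: $\varphi::=\mathrm{tt}\mid\mathrm{ff}\mid\varphi\vee\varphi\mid\varphi\wedge\varphi\mid\langle A\rangle\varphi\mid[A]\varphi\mid\min X.\varphi\mid\max X.\varphi\mid X$, with linear-time semantics over $\mathrm{Act}^\omega$: $[\![\mathrm{tt}]\!]_L=\mathrm{Act}^\omega$, $[\![\mathrm{ff}]\!]_L=\emptyset$, $\vee,\wedge$ union/intersection, $[\![\langle A\rangle\varphi,\sigma]\!]_L=\{ct\mid c\in A,t\in[\![\varphi,\sigma]\!]_L\}$,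 $[\![[A]\varphi,\sigma]\!]_L=\{t\mid\forall c\in A,\forall t'.\ t=ct'\Rightarrow t'\in[\![\varphi,\sigma]\!]_L\}$, $\min/\max$ as least/greatest fixpoints, $[\![X,\sigma]\!]_L=\sigma(X)$; singletons $\{c\}$ are written $c$. Translation: $\mathrm{trans}(\varphi)=\max X.(\langle a\rangle X\vee\langle b\rangle\langle a\rangle X)\wedge\varphi^t$, where $p^t=\langle b\rangle\mathrm{tt}$, $(\neg p)^t=[b]\mathrm{ff}$, $(\cdot)^t$ commutes with $\vee,\wedge$, $([1]\psi)^t=\max X.([b]X\wedge[a]\psi^t)$ and $([2]\psi)^t=\max X.([b]X\wedge[a]X\wedge[a]\psi^t)$ (with fresh variables $X$). *)

theory Defs
  imports Main "HOL-Library.Stream"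
begin

datatype mform = P | NP | MOr mform mform | MAnd mform mform
  | Box1 mform | Box2 mform

text \<open>A Kripke structure with world set the whole type 'w (nonempty as every HOL type),
  R1, R2 the two accessibility relations and V w = (p in V(w)).\<close>
definition kripke_DK4 :: "('w \<Rightarrow> 'w \<Rightarrow> bool) \<Rightarrow> ('w \<Rightarrow> 'w \<Rightarrow> bool) \<Rightarrow> bool" where
  "kripke_DK4 R1 R2 \<longleftrightarrow> (\<forall>x. \<exists>y. R1 x y) \<and> transp R2 \<and> (\<forall>x y. R1 x y \<longrightarrow> R2 x y)"

fun msat :: "('w \<Rightarrow> 'w \<Rightarrow> bool) \<Rightarrow> ('w \<Rightarrow> 'w \<Rightarrow> bool) \<Rightarrow> ('w \<Rightarrow> bool) \<Rightarrow> 'w \<Rightarrow> mform \<Rightarrow> bool" where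
  "msat R1 R2 V w P = V w"
| "msat R1 R2 V w NP = (\<not> V w)"
| "msat R1 R2 V w (MOr f g) = (msat R1 R2 V w f \<or> msat R1 R2 V w g)"
| "msat R1 R2 V w (MAnd f g) = (msat R1 R2 V w f \<and> msat R1 R2 V w g)"
| "msat R1 R2 V w (Box1 f) = (\<forall>w'. R1 w w' \<longrightarrow> msat R1 R2 V w' f)"
| "msat R1 R2 V w (Box2 f) = (\<forall>w'. R2 w w' \<longrightarrow> msat R1 R2 V w' f)"

datatype 'a hml = TT | FF | HOr "'a hml" "'a hml" | HAnd "'a hml" "'a hml"
  | Dia "'a set" "'a hml" | Bx "'a set" "'a hml"
  | Min nat "'a hml" | Max nat "'a hml" | Var nat

fun hsem :: "'a hml \<Rightarrow> (nat \<Rightarrow> 'a stream set) \<Rightarrow> 'a stream set" where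
  "hsem TT \<sigma> = UNIV"
| "hsem FF \<sigma> = {}"
| "hsem (HOr f g) \<sigma> = hsem f \<sigma> \<union> hsem g \<sigma>"
| "hsem (HAnd f g) \<sigma> = hsem f \<sigma> \<inter> hsem g \<sigma>"
| "hsem (Dia A f) \<sigma> = {c ## t | c t. c \<in> A \<and> t \<in> hsem f \<sigma>}"
| "hsem (Bx A f) \<sigma> = {t. \<forall>c\<in>A. \<forall>t'. t = c ## t' \<longrightarrow> t' \<in> hsem f \<sigma>}"
| "hsem (Min X f) \<sigma> = lfp (\<lambda>S. hsem f (\<sigma>(X := S)))"
| "hsem (Max X f) \<sigma> = gfp (\<lambda>S. hsem f (\<sigma>(X := S)))"
| "hsem (Var X) \<sigma> = \<sigma> X"

text \<open>Semantics of a (closed) formula; the environment is irrelevant for closed formulas.\<close>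
definition hsemL :: "'a hml \<Rightarrow> 'a stream set" where
  "hsemL f = hsem f (\<lambda>_. {})"

text \<open>The natural number n is the next fresh fixpoint variable (depth-indexed).\<close>
fun tr :: "'a \<Rightarrow> 'a \<Rightarrow> nat \<Rightarrow> mform \<Rightarrow> 'a hml" where
  "tr a b n P = Dia {b} TT"
| "tr a b n NP = Bx {b} FF"
| "tr a b n (MOr f g) = HOr (tr a b n f) (tr a b n g)"
| "tr a b n (MAnd f g) = HAnd (tr a b n f) (tr a b n g)"
| "tr a b n (Box1 f) = Max n (HAnd (Bx {b} (Var n)) (Bx {a} (tr a b (Suc n) f)))"
| "tr a b n (Box2 f) = Max n (HAnd (HAnd (Bx {b} (Var n)) (Bx {a} (Var n))) (Bx {a} (tr a b (Suc n) f)))"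

definition trans :: "'a \<Rightarrow> 'a \<Rightarrow> mform \<Rightarrow> 'a hml" where
  "trans a b f = HAnd (Max 0 (HOr (Dia {a} (Var 0)) (Dia {b} (Dia {a} (Var 0))))) (tr a b 1 f)"

end

theory Submission
  imports Defs
begin

lemma hsem_mono: "(\<And>x. \<sigma> x \<subseteq> \<sigma>' x) \<Longrightarrow> hsem f \<sigma> \<subseteq> hsem f \<sigma>'"
proof (induction f arbitrary: \<sigma> \<sigma>')
  case (Min X f)
  show ?case apply simp apply (rule lfp_mono) apply (rule Min.IH) using Min.prems by auto
next
  case (Max X f)
  show ?case apply simp apply (rule gfp_mono) apply (rule Max.IH) using Max.prems by auto
qed (auto, blast+)

lemma mono_env: "mono (\<lambda>S. hsem f (\<sigma>(X := S)))"
  by (rule monoI, rule hsem_mono, auto)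

lemma gfp_unf: "t \<in> hsem (Max X f) \<sigma> \<Longrightarrow> t \<in> hsem f (\<sigma>(X := hsem (Max X f) \<sigma>))"
  using gfp_unfold[OF mono_env[of f \<sigma> X]] by simp

definition blk :: "'a \<Rightarrow> 'a \<Rightarrow> (nat \<Rightarrow> bool) \<Rightarrow> nat \<Rightarrow> 'a list" where
  "blk a b v i = (if v i then [b,a] else [a])"

definition W :: "'a \<Rightarrow> 'a \<Rightarrow> (nat \<Rightarrow> bool) \<Rightarrow> nat \<Rightarrow> 'a stream" where
  "W a b v k = flat (smap (blk a b v) (fromN k))"

lemma W_unf: "W a b v k = (if v k then b ## a ## W a b v (Suc k) else a ## W a b v (Suc k))"
  unfolding W_def by (subst siterate.code) (simp add: blk_def)

lemma dir1:
  assumes ab: "a \<noteq> b" and path: "\<And>i. QA (p i) (p (Suc i))" and R2: "\<And>i j. i < j \<Longrightarrow> QB (p i) (p j)"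
  shows "msat QA QB V (p k) f \<Longrightarrow> W a b (V \<circ> p) k \<in> hsem (tr a b n f) \<sigma>"
proof (induction f arbitrary: k n \<sigma>)
  case P
  then show ?case by (subst W_unf) auto
next
  case NP
  then show ?case using ab by (subst W_unf) auto
next
  case (MOr f1 f2)
  then show ?case by auto
next
  case (MAnd f1 f2)
  then show ?case by auto
next
  case (Box1 f)
  let ?W = "W a b (V \<circ> p)"
  have fs: "msat QA QB V (p (Suc k)) f" using Box1.prems path by auto
  let ?S = "{?W k, a ## ?W (Suc k)}"
  have hW: "?W k = (if V (p k) then b ## a ## ?W (Suc k) else a ## ?W (Suc k))"
    by (rule W_unf[of a b "V \<circ> p" k, simplified comp_apply])
  have I: "?W (Suc k) \<in> hsem (tr a b (Suc n) f) (\<sigma>(n := ?S))" using Box1.IH[OF fs] .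
  have "?S \<subseteq> hsem (HAnd (Bx {b} (Var n)) (Bx {a} (tr a b (Suc n) f))) (\<sigma>(n := ?S))"
    using I ab hW by auto
  hence "?S \<subseteq> hsem (tr a b n (Box1 f)) \<sigma>" by (simp add: gfp_upperbound del: insert_subset)
  then show ?case by blast
next
  case (Box2 f)
  let ?W = "W a b (V \<circ> p)"
  have fs: "\<And>j. j > k \<Longrightarrow> msat QA QB V (p j) f" using Box2.prems R2 by auto
  let ?S = "{t. \<exists>j\<ge>k. t = ?W j \<or> t = a ## ?W (Suc j)}"
  have "?S \<subseteq> hsem (HAnd (HAnd (Bx {b} (Var n)) (Bx {a} (Var n))) (Bx {a} (tr a b (Suc n) f))) (\<sigma>(n := ?S))"
  proof
    fix t assume "t \<in> ?S"
    then obtain j where j: "j \<ge> k" "t = ?W j \<or> t = a ## ?W (Suc j)" by auto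
    have "?W (Suc j) \<in> hsem (tr a b (Suc n) f) (\<sigma>(n := ?S))" using j by (intro Box2.IH fs) auto
    moreover have "?W (Suc j) \<in> ?S" using j by (auto intro: exI[of _ "Suc j"])
    moreover have "a ## ?W (Suc j) \<in> ?S" using j by auto
    ultimately show "t \<in> hsem (HAnd (HAnd (Bx {b} (Var n)) (Bx {a} (Var n))) (Bx {a} (tr a b (Suc n) f))) (\<sigma>(n := ?S))"
      using j ab W_unf[of a b "V \<circ> p" j] by (auto split: if_splits)
  qed
  hence "?S \<subseteq> hsem (tr a b n (Box2 f)) \<sigma>" by (simp add: gfp_upperbound)
  moreover have "?W k \<in> ?S" by auto
  ultimately show ?case by blast
qed

lemma step_unf:
  assumes ab: "a \<noteq> b" and sh: "u k = a ## u (Suc k) \<or> u k = b ## a ## u (Suc k)"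
    and m: "u k \<in> gfp F" and mo: "mono F"
    and F: "\<And>S. F S \<subseteq> {t. \<forall>t'. t = b ## t' \<longrightarrow> t' \<in> S} \<inter> {t. \<forall>t'. t = a ## t' \<longrightarrow> t' \<in> Q S}"
  shows "u (Suc k) \<in> Q (gfp F)"
proof -
  have m2: "u k \<in> F (gfp F)" using m gfp_unfold[OF mo] by simp
  show ?thesis
  proof (cases "u k = a ## u (Suc k)")
    case True
    then show ?thesis using m2 F by blast
  next
    case False
    hence e: "u k = b ## a ## u (Suc k)" using sh by blast
    hence "a ## u (Suc k) \<in> gfp F" using m2 F by blast
    hence "a ## u (Suc k) \<in> F (gfp F)" using gfp_unfold[OF mo] by simp
    then show ?thesis using F by blast
  qed
qed

lemma dir2:
  assumes ab: "a \<noteq> b" and sh: "\<And>k. u k = a ## u (Suc k) \<or> u k = b ## a ## u (Suc k)"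
  shows "u k \<in> hsem (tr a b n f) \<sigma> \<Longrightarrow> msat (\<lambda>i j. j = Suc i) (\<lambda>i j. i < j) (\<lambda>i. shd (u i) = b) k f"
proof (induction f arbitrary: k n \<sigma>)
  case P
  then show ?case by auto
next
  case NP
  then show ?case by (cases "u k") auto
next
  case (MOr f1 f2)
  then show ?case by auto
next
  case (MAnd f1 f2)
  then show ?case by auto
next
  case (Box1 f)
  let ?F = "\<lambda>S. hsem (HAnd (Bx {b} (Var n)) (Bx {a} (tr a b (Suc n) f))) (\<sigma>(n := S))"
  have "u (Suc k) \<in> hsem (tr a b (Suc n) f) (\<sigma>(n := gfp ?F))"
    apply (rule step_unf[where F = ?F and Q = "\<lambda>S. hsem (tr a b (Suc n) f) (\<sigma>(n := S))" and u = u and k = k, OF ab sh])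
    using Box1.prems apply simp
     apply (rule mono_env)
    by auto
  then show ?case using Box1.IH by auto
next
  case (Box2 f)
  let ?F = "\<lambda>S. hsem (HAnd (HAnd (Bx {b} (Var n)) (Bx {a} (Var n))) (Bx {a} (tr a b (Suc n) f))) (\<sigma>(n := S))"
  have st: "u (Suc j) \<in> gfp ?F \<and> u (Suc j) \<in> hsem (tr a b (Suc n) f) (\<sigma>(n := gfp ?F))"
    if "u j \<in> gfp ?F" for j
    apply (rule conjI)
     apply (rule step_unf[where F = ?F and Q = "\<lambda>S. S" and u = u and k = j, OF ab sh that mono_env]) apply auto[1]
    apply (rule step_unf[where F = ?F and Q = "\<lambda>S. hsem (tr a b (Suc n) f) (\<sigma>(n := S))" and u = u and k = j, OF ab sh that mono_env])
    by auto
  have all: "u (k + i) \<in> gfp ?F" for i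
  proof (induction i)
    case 0 then show ?case using Box2.prems unfolding add_0_right tr.simps hsem.simps(8) .
  next
    case (Suc i)
    have "u (Suc (k+i)) \<in> gfp ?F" using st[OF Suc.IH] by blast
    then show ?case by (simp only: add_Suc_right)
  qed
  show ?case
  proof (simp, intro allI impI)
    fix j assume "k < j"
    then obtain i where j: "j = Suc (k + i)" by (metis less_iff_Suc_add)
    show "msat (\<lambda>i j. j = Suc i) (\<lambda>i j. i < j) (\<lambda>i. shd (u i) = b) j f"
      using Box2.IH st[OF all[of i]] j by auto
  qed
qed

definition nxt :: "'a \<Rightarrow> 'a stream \<Rightarrow> 'a stream" where
  "nxt b s = (if shd s = b then stl (stl s) else stl s)"

theorem mainTheorem19:
  fixes a b :: "'act::finite" and \<phi> :: mform
  assumes "a \<noteq> b"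
  shows "((\<exists>(R1::'w \<Rightarrow> 'w \<Rightarrow> bool) R2 V w. kripke_DK4 R1 R2 \<and> msat R1 R2 V w \<phi>)
            \<longrightarrow> hsemL (trans a b \<phi>) \<noteq> {})
       \<and> (hsemL (trans a b \<phi>) \<noteq> {}
            \<longrightarrow> (\<exists>(R1::nat \<Rightarrow> nat \<Rightarrow> bool) R2 V w. kripke_DK4 R1 R2 \<and> msat R1 R2 V w \<phi>))"
proof (intro conjI impI)
  let ?M = "Max 0 (HOr (Dia {a} (Var 0)) (Dia {b} (Dia {a} (Var 0))))"
  let ?s0 = "(\<lambda>_. {}) :: nat \<Rightarrow> 'act stream set"
  assume "\<exists>(R1::'w \<Rightarrow> 'w \<Rightarrow> bool) R2 V w. kripke_DK4 R1 R2 \<and> msat R1 R2 V w \<phi>"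
  then obtain R1 R2 V and w :: 'w where K: "kripke_DK4 R1 R2" and m: "msat R1 R2 V w \<phi>" by blast
  define p where "p = rec_nat w (\<lambda>_ x. SOME y. R1 x y)"
  have p0: "p 0 = w" by (simp add: p_def)
  have path: "R1 (p i) (p (Suc i))" for i
  proof -
    have "\<exists>y. R1 (p i) y" using K unfolding kripke_DK4_def by blast
    hence "R1 (p i) (SOME y. R1 (p i) y)" by (rule someI_ex)
    thus ?thesis by (simp add: p_def)
  qed
  have R2: "R2 (p i) (p j)" if "i < j" for i j
    using that
  proof (induction j)
    case 0 then show ?case by simp
  next
    case (Suc j)
    have r: "R2 (p j) (p (Suc j))" using path K unfolding kripke_DK4_def by blast
    show ?case
    proof (cases "i = j")
      case True then show ?thesis using r by simp
    next
      case False
      hence "R2 (p i) (p j)" using Suc by simp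
      then show ?thesis using r K unfolding kripke_DK4_def transp_def by blast
    qed
  qed
  let ?W = "W a b (V \<circ> p)"
  have t1: "?W 0 \<in> hsem (tr a b 1 \<phi>) ?s0"
    by (rule dir1[where p = p and QA = R1 and QB = R2, OF assms path R2]) (use m p0 in auto)
  have "range ?W \<subseteq> hsem (HOr (Dia {a} (Var 0)) (Dia {b} (Dia {a} (Var 0)))) (?s0(0 := range ?W))"
  proof
    fix t assume "t \<in> range ?W"
    then obtain j where "t = ?W j" by auto
    then show "t \<in> hsem (HOr (Dia {a} (Var 0)) (Dia {b} (Dia {a} (Var 0)))) (?s0(0 := range ?W))"
      using W_unf[of a b "V \<circ> p" j] by (auto split: if_splits)
  qed
  hence "range ?W \<subseteq> hsem ?M ?s0" by (simp add: gfp_upperbound del: fun_upd_apply)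
  hence "?W 0 \<in> hsem ?M ?s0" by blast
  with t1 have "?W 0 \<in> hsemL (trans a b \<phi>)" by (simp add: hsemL_def trans_def)
  then show "hsemL (trans a b \<phi>) \<noteq> {}" by blast
next
  let ?M = "Max 0 (HOr (Dia {a} (Var 0)) (Dia {b} (Dia {a} (Var 0))))"
  let ?s0 = "(\<lambda>_. {}) :: nat \<Rightarrow> 'act stream set"
  let ?G = "hsem ?M ?s0"
  assume "hsemL (trans a b \<phi>) \<noteq> {}"
  then obtain t where t: "t \<in> ?G" "t \<in> hsem (tr a b 1 \<phi>) ?s0"
    by (auto simp: hsemL_def trans_def)
  have Gu: "s \<in> ?G \<Longrightarrow> (\<exists>s'. s = a ## s' \<and> s' \<in> ?G) \<or> (\<exists>s'. s = b ## a ## s' \<and> s' \<in> ?G)" for s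
    using gfp_unf[of s 0 "HOr (Dia {a} (Var 0)) (Dia {b} (Dia {a} (Var 0)))" ?s0] by auto
  define u where "u k = (nxt b ^^ k) t" for k
  have uG: "u k \<in> ?G" for k
  proof (induction k)
    case 0 then show ?case using t by (simp add: u_def)
  next
    case (Suc k)
    have e: "u (Suc k) = nxt b (u k)" by (simp add: u_def)
    from Gu[OF Suc] show ?case unfolding e by (elim disjE exE conjE) (simp_all add: nxt_def assms)
  qed
  have sh: "u k = a ## u (Suc k) \<or> u k = b ## a ## u (Suc k)" for k
  proof -
    have e: "u (Suc k) = nxt b (u k)" by (simp add: u_def)
    from Gu[OF uG[of k]] show ?thesis unfolding e by (elim disjE exE conjE) (simp_all add: nxt_def assms)
  qed
  have "msat (\<lambda>i j. j = Suc i) (\<lambda>i j. i < j) (\<lambda>i. shd (u i) = b) 0 \<phi>"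
    by (rule dir2[where u = u, OF assms sh]) (use t in \<open>simp add: u_def\<close>)
  moreover have "kripke_DK4 (\<lambda>i j. j = Suc (i::nat)) (\<lambda>i j. i < j)"
    unfolding kripke_DK4_def transp_def by auto
  ultimately show "\<exists>(R1::nat \<Rightarrow> nat \<Rightarrow> bool) R2 V w. kripke_DK4 R1 R2 \<and> msat R1 R2 V w \<phi>"
    by blast
qed

end
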